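(* Let $X$ be a random variable whose support is contained in the bounded interval $(l,r)$, with $l,r$ finite. Then: (i) for all $\gamma\ge1$ such that $(\gamma,0)\in D_X$ and $(0,\gamma)\in D_X$, $$\left[(r-l)^{1/\gamma}-[H_X(\gamma)]^{1/\gamma}\right]^\gamma\le K_X(\gamma)\le\left[(r-l)^{1/\gamma}+[H_X(\gamma)]^{1/\gamma}\right]^\gamma,$$ $$\left[(r-l)^{1/\gamma}-[K_X(\gamma)]^{1/\gamma}\right]^\gamma\le H_X(\gamma)\le\left[(r-l)^{1/\gamma}+[K_X(\gamma)]^{1/\gamma}\right]^\gamma;$$ (ii) for all $\gamma\ge1$ such that $(0,\gamma)\in D_X$, $$G_X(\gamma,\gamma)\le\left[[K_X(\gamma)]^{1/\gamma}+[K_X(2\gamma)]^{1/\gamma}\right]^\gamma;$$ (iii) for all $\gamma\ge1$ such that $(\gamma,0)\in D_X$, $$G_X(\gamma,\gamma)\le\left[[H_X(\gamma)]^{1/\gamma}+[H_X(2\gamma)]^{1/\gamma}\right]^\gamma.$$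
   Context: For a random variable $X$ with CDF $F$ and survival function $\overline F=1-F$, with $l=\inf\{x:F(x)>0\}$, $r=\sup\{x:\overline F(x)>0\}$, the CIGF is $G_X(\alpha,\beta)=\int_l^r [F(x)]^\alpha[\overline F(x)]^\beta\,dx$ on $D_X=\{(\alpha,\beta)\in\mathbb{R}^2: G_X(\alpha,\beta)<\infty\}$; $H_X(\alpha)=G_X(\alpha,0)=\int_l^r[F(x)]^\alpha dx$ and $K_X(\beta)=G_X(0,\beta)=\int_l^r[\overline F(x)]^\beta dx$. *)

theory Defs
  imports "HOL-Probability.Probability"
begin

text \<open>A random variable X is represented by its distribution M (a real_distribution);
  its CDF is cdf M and its survival function is 1 - cdf M.\<close>

definition supp_left :: "real measure \<Rightarrow> real" where
  "supp_left M = Inf {x. 0 < cdf M x}"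

definition supp_right :: "real measure \<Rightarrow> real" where
  "supp_right M = Sup {x. 0 < 1 - cdf M x}"

text \<open>Integrand of the CIGF. On the open interval (l,r) both F and 1-F are strictly
  positive, so powr is the usual real power there; endpoints are Lebesgue-null.\<close>
definition cigf_integrand :: "real measure \<Rightarrow> real \<Rightarrow> real \<Rightarrow> real \<Rightarrow> real" where
  "cigf_integrand M a b x = (cdf M x) powr a * (1 - cdf M x) powr b"

definition CIGF :: "real measure \<Rightarrow> real \<Rightarrow> real \<Rightarrow> real" where
  "CIGF M a b = (LINT x : {supp_left M<..<supp_right M} | lborel. cigf_integrand M a b x)"

definition CIGF_dom :: "real measure \<Rightarrow> (real \<times> real) set" where
  "CIGF_dom M = {(a, b). set_integrable lborel {supp_left M<..<supp_right M} (cigf_integrand M a b)}"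

definition CIGF_H :: "real measure \<Rightarrow> real \<Rightarrow> real" where
  "CIGF_H M a = CIGF M a 0"

definition CIGF_K :: "real measure \<Rightarrow> real \<Rightarrow> real" where
  "CIGF_K M b = CIGF M 0 b"

end

theory Submission
  imports Defs
begin

lemma supp_props:
  fixes M :: "real measure"
  assumes rd: "real_distribution M"
    and bb: "bdd_below {x. 0 < cdf M x}"
    and ba: "bdd_above {x. 0 < 1 - cdf M x}"
  shows "supp_left M \<le> supp_right M"
    and "\<And>x. supp_left M < x \<Longrightarrow> x < supp_right M \<Longrightarrow> 0 < cdf M x \<and> cdf M x < 1"
proof -
  interpret real_distribution M by (rule rd)
  show "supp_left M \<le> supp_right M"
  proof (rule ccontr)
    assume nt: "\<not> supp_left M \<le> supp_right M"
    define x where "x = (supp_left M + supp_right M) / 2"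
    have "x < supp_left M" "supp_right M < x" using nt by (auto simp: x_def)
    have "\<not> 0 < cdf M x"
    proof
      assume "0 < cdf M x"
      then have "supp_left M \<le> x" unfolding supp_left_def by (intro cInf_lower bb) auto
      with \<open>x < supp_left M\<close> show False by simp
    qed
    moreover have "\<not> 0 < 1 - cdf M x"
    proof
      assume "0 < 1 - cdf M x"
      then have "x \<le> supp_right M" unfolding supp_right_def by (intro cSup_upper ba) auto
      with \<open>supp_right M < x\<close> show False by simp
    qed
    ultimately show False by simp
  qed
  fix x assume x: "supp_left M < x" "x < supp_right M"
  have ne1: "{x. 0 < cdf M x} \<noteq> {}"
  proof -
    have "eventually (\<lambda>x. 0 < cdf M x) at_top"
      using order_tendstoD(1)[OF cdf_lim_at_top_prob, of 0] by simp
    then obtain N where "\<And>n. n \<ge> N \<Longrightarrow> 0 < cdf M n" by (auto simp: eventually_at_top_linorder)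
    then show ?thesis by auto
  qed
  have ne2: "{x. 0 < 1 - cdf M x} \<noteq> {}"
  proof -
    have "eventually (\<lambda>x. cdf M x < 1) at_bot"
      using order_tendstoD(2)[OF cdf_lim_at_bot, of 1] by simp
    then obtain N where "\<And>n. n \<le> N \<Longrightarrow> cdf M n < 1" by (auto simp: eventually_at_bot_linorder)
    then show ?thesis by auto
  qed
  obtain y where y: "0 < cdf M y" "y < x"
    using x(1) cInf_less_iff[OF ne1 bb] unfolding supp_left_def by auto
  obtain z where z: "0 < 1 - cdf M z" "x < z"
    using x(2) less_cSup_iff[OF ne2 ba] unfolding supp_right_def by auto
  have "cdf M y \<le> cdf M x" "cdf M x \<le> cdf M z" using y z by (auto intro: cdf_nondecreasing)
  then show "0 < cdf M x \<and> cdf M x < 1" using y z by simp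
qed

lemma cigf_meas:
  fixes M :: "real measure"
  assumes rd: "real_distribution M"
  shows "cigf_integrand M a b \<in> borel_measurable lborel"
proof -
  interpret real_distribution M by (rule rd)
  have "mono (cdf M)" using cdf_nondecreasing by (auto simp: mono_def)
  then have [measurable]: "cdf M \<in> borel_measurable borel" by (rule borel_measurable_mono)
  show ?thesis unfolding cigf_integrand_def by measurable
qed

lemma scalar_key:
  fixes f g a b \<gamma> :: real
  assumes f: "0 < f" and g: "0 < g" and fg: "f + g = 1" and a: "0 < a" and b: "0 < b"
    and ga: "1 \<le> \<gamma>"
  shows "1 \<le> f powr \<gamma> * ((a + b) powr (\<gamma> - 1) / a powr (\<gamma> - 1))
           + g powr \<gamma> * ((a + b) powr (\<gamma> - 1) / b powr (\<gamma> - 1))"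
proof -
  define t where "t = b / (a + b)"
  have t: "0 < t" "t < 1" using a b by (auto simp: t_def field_simps)
  have omt: "1 - t = a / (a + b)" using a b by (simp add: t_def field_simps)
  have cv: "((1 - t) *\<^sub>R (f / (1 - t)) + t *\<^sub>R (g / t)) powr \<gamma>
      \<le> (1 - t) * (f / (1 - t)) powr \<gamma> + t * (g / t) powr \<gamma>"
    using convex_onD[OF powr_convex[OF ga], of t "f / (1 - t)" "g / t"] t f g by auto
  have l: "(1 - t) *\<^sub>R (f / (1 - t)) + t *\<^sub>R (g / t) = 1" using t fg by simp
  have e: "s * (h / s) powr \<gamma> = h powr \<gamma> / s powr (\<gamma> - 1)" if "0 < s" "0 < h" for s h :: real
  proof -
    have "s powr \<gamma> = s powr (\<gamma> - 1) * s" using that by (simp add: powr_diff)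
    then show ?thesis using that by (simp add: powr_divide field_simps)
  qed
  have e1: "(1 - t) * (f / (1 - t)) powr \<gamma> = f powr \<gamma> * ((a + b) powr (\<gamma> - 1) / a powr (\<gamma> - 1))"
    using e[of "1 - t" f] t f a b unfolding omt by (simp add: powr_divide)
  have e2: "t * (g / t) powr \<gamma> = g powr \<gamma> * ((a + b) powr (\<gamma> - 1) / b powr (\<gamma> - 1))"
    using e[of t g] t g a b unfolding t_def by (simp add: powr_divide)
  show ?thesis using cv l e1 e2 by simp
qed


lemma cigf_basic:
  fixes M :: "real measure"
  assumes rd: "real_distribution M"
    and bb: "bdd_below {x. 0 < cdf M x}"
    and ba: "bdd_above {x. 0 < 1 - cdf M x}"
    and a: "0 \<le> a" and b: "0 \<le> b"
  shows "set_integrable lborel {supp_left M<..<supp_right M} (cigf_integrand M a b)"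
    and "0 \<le> CIGF M a b"
    and "CIGF M a b \<le> supp_right M - supp_left M"
    and "supp_left M < supp_right M \<Longrightarrow> 0 < CIGF M a b"
proof -
  define l where "l = supp_left M"
  define r where "r = supp_right M"
  note lr = supp_props(1)[OF rd bb ba, folded l_def r_def]
  note inI = supp_props(2)[OF rd bb ba, folded l_def r_def]
  have one: "set_integrable lborel {l<..<r} (\<lambda>_. 1::real)"
    unfolding set_integrable_def by (simp add: lr)
  have one_int: "(LINT x:{l<..<r}|lborel. (1::real)) = r - l"
    using lr by (simp add: set_integral_const)
  have bnd: "0 < cigf_integrand M a b x \<and> cigf_integrand M a b x \<le> 1" if "x \<in> {l<..<r}" for x
  proof -
    have c: "0 < cdf M x" "cdf M x < 1" using inI that by auto
    have "cdf M x powr a \<le> 1" "(1 - cdf M x) powr b \<le> 1"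
      using c a b by (auto intro!: powr_le1)
    moreover have "0 < cdf M x powr a" "0 < (1 - cdf M x) powr b" using c by auto
    ultimately show ?thesis unfolding cigf_integrand_def
      by (simp add: mult_le_one)
  qed
  have meas: "set_borel_measurable lborel {l<..<r} (cigf_integrand M a b)"
    unfolding set_borel_measurable_def using cigf_meas[OF rd] by measurable
  show int: "set_integrable lborel {supp_left M<..<supp_right M} (cigf_integrand M a b)"
    unfolding l_def[symmetric] r_def[symmetric]
    by (rule set_integrable_bound[OF one meas]) (use bnd in \<open>fastforce intro!: AE_I2 simp: abs_le_iff\<close>)
  show nn: "0 \<le> CIGF M a b"
    unfolding CIGF_def set_lebesgue_integral_def
    using bnd by (intro Bochner_Integration.integral_nonneg) (auto simp: indicator_def l_def r_def less_imp_le)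
  show "CIGF M a b \<le> supp_right M - supp_left M"
    unfolding CIGF_def l_def[symmetric] r_def[symmetric] one_int[symmetric]
    by (rule set_integral_mono[OF int[folded l_def r_def] one]) (use bnd in auto)
  assume lt: "supp_left M < supp_right M"
  show "0 < CIGF M a b"
  proof (rule ccontr)
    assume "\<not> 0 < CIGF M a b"
    with nn have z: "CIGF M a b = 0" by simp
    have ii: "integrable lborel (\<lambda>x. indicator {l<..<r} x *\<^sub>R cigf_integrand M a b x)"
      using int[folded l_def r_def] unfolding set_integrable_def .
    have "AE x in lborel. indicator {l<..<r} x *\<^sub>R cigf_integrand M a b x = 0"
      using z integral_nonneg_eq_0_iff_AE[OF ii] bnd
      unfolding CIGF_def set_lebesgue_integral_def l_def[symmetric] r_def[symmetric]
      by (auto simp: indicator_def less_imp_le)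
    then have "AE x in lborel. x \<notin> {l<..<r}"
      by eventually_elim (use bnd in \<open>fastforce simp: indicator_def\<close>)
    then have "emeasure lborel {l<..<r} = 0"
      by (subst (asm) AE_iff_measurable[of "{l<..<r}"]) auto
    then show False using lt by (simp add: l_def r_def)
  qed
qed


lemma cigf_G_le:
  fixes M :: "real measure"
  assumes rd: "real_distribution M"
    and bb: "bdd_below {x. 0 < cdf M x}"
    and ba: "bdd_above {x. 0 < 1 - cdf M x}"
    and g: "0 \<le> \<gamma>"
  shows "CIGF M \<gamma> \<gamma> \<le> CIGF_K M \<gamma>" and "CIGF M \<gamma> \<gamma> \<le> CIGF_H M \<gamma>"
proof -
  note inI = supp_props(2)[OF rd bb ba]
  note i = cigf_basic(1)[OF rd bb ba]
  show "CIGF M \<gamma> \<gamma> \<le> CIGF_K M \<gamma>"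
    unfolding CIGF_K_def CIGF_def
  proof (rule set_integral_mono[OF i i])
    fix x assume "x \<in> {supp_left M<..<supp_right M}"
    then have c: "0 < cdf M x" "cdf M x < 1" using inI by auto
    have "cdf M x powr \<gamma> \<le> 1" using c g by (intro powr_le1) auto
    then show "cigf_integrand M \<gamma> \<gamma> x \<le> cigf_integrand M 0 \<gamma> x"
      unfolding cigf_integrand_def using c
      by (simp add: mult_left_le_one_le)
  qed (use g in auto)
  show "CIGF M \<gamma> \<gamma> \<le> CIGF_H M \<gamma>"
    unfolding CIGF_H_def CIGF_def
  proof (rule set_integral_mono[OF i i])
    fix x assume "x \<in> {supp_left M<..<supp_right M}"
    then have c: "0 < cdf M x" "cdf M x < 1" using inI by auto
    have "(1 - cdf M x) powr \<gamma> \<le> 1" using c g by (intro powr_le1) auto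
    then show "cigf_integrand M \<gamma> \<gamma> x \<le> cigf_integrand M \<gamma> 0 x"
      unfolding cigf_integrand_def using c
      by (simp add: mult_right_le_one_le)
  qed (use g in auto)
qed

lemma cigf_mink:
  fixes M :: "real measure"
  assumes rd: "real_distribution M"
    and bb: "bdd_below {x. 0 < cdf M x}"
    and ba: "bdd_above {x. 0 < 1 - cdf M x}"
    and g: "1 \<le> \<gamma>"
  shows "(supp_right M - supp_left M) powr (1/\<gamma>) \<le> CIGF_H M \<gamma> powr (1/\<gamma>) + CIGF_K M \<gamma> powr (1/\<gamma>)"
proof (cases "supp_left M < supp_right M")
  case False
  then have "supp_right M - supp_left M = 0" using supp_props(1)[OF rd bb ba] by simp
  then show ?thesis by simp
next
  case lt: True
  note inI = supp_props(2)[OF rd bb ba]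
  define H where "H = CIGF_H M \<gamma>"
  define K where "K = CIGF_K M \<gamma>"
  define a where "a = H powr (1/\<gamma>)"
  define b where "b = K powr (1/\<gamma>)"
  have H: "0 < H" unfolding H_def CIGF_H_def using cigf_basic(4)[OF rd bb ba _ _ lt] g by simp
  have K: "0 < K" unfolding K_def CIGF_K_def using cigf_basic(4)[OF rd bb ba _ _ lt] g by simp
  have a: "0 < a" "a powr \<gamma> = H" using H g by (auto simp: a_def powr_powr)
  have b: "0 < b" "b powr \<gamma> = K" using K g by (auto simp: b_def powr_powr)
  define C1 where "C1 = (a + b) powr (\<gamma> - 1) / a powr (\<gamma> - 1)"
  define C2 where "C2 = (a + b) powr (\<gamma> - 1) / b powr (\<gamma> - 1)"
  note i = cigf_basic(1)[OF rd bb ba]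
  have one: "set_integrable lborel {supp_left M<..<supp_right M} (\<lambda>_. 1::real)"
    unfolding set_integrable_def by (simp add: lt less_imp_le)
  have one_int: "(LINT x:{supp_left M<..<supp_right M}|lborel. (1::real)) = supp_right M - supp_left M"
    using lt by (simp add: set_integral_const)
  have i2: "set_integrable lborel {supp_left M<..<supp_right M}
      (\<lambda>x. C1 * cigf_integrand M \<gamma> 0 x + C2 * cigf_integrand M 0 \<gamma> x)"
    using i g by (intro set_integral_add set_integrable_mult_right) auto
  have "supp_right M - supp_left M
      \<le> (LINT x:{supp_left M<..<supp_right M}|lborel. C1 * cigf_integrand M \<gamma> 0 x + C2 * cigf_integrand M 0 \<gamma> x)"
    unfolding one_int[symmetric]
  proof (rule set_integral_mono[OF one i2])
    fix x assume "x \<in> {supp_left M<..<supp_right M}"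
    then have c: "0 < cdf M x" "cdf M x < 1" using inI by auto
    show "1 \<le> C1 * cigf_integrand M \<gamma> 0 x + C2 * cigf_integrand M 0 \<gamma> x"
      using scalar_key[of "cdf M x" "1 - cdf M x" a b \<gamma>] c a b g
      unfolding cigf_integrand_def C1_def C2_def by (simp add: mult.commute)
  qed
  also have "\<dots> = C1 * H + C2 * K"
    using i g unfolding H_def K_def CIGF_H_def CIGF_K_def CIGF_def by (subst set_integral_add) auto
  also have "\<dots> = (a + b) powr \<gamma>"
  proof -
    have e: "C * (c powr \<gamma>) = (a + b) powr (\<gamma> - 1) * c"
      if "C = (a + b) powr (\<gamma> - 1) / c powr (\<gamma> - 1)" "0 < c" for C c
    proof -
      have "c powr \<gamma> = c powr (\<gamma> - 1) * c" using that by (simp add: powr_diff)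
      then show ?thesis using that by simp
    qed
    have "(a + b) powr \<gamma> = (a + b) powr (\<gamma> - 1) * (a + b)" using a b by (simp add: powr_diff)
    then show ?thesis using e[OF C1_def a(1)] e[OF C2_def b(1)] a b by (simp add: algebra_simps)
  qed
  finally have "supp_right M - supp_left M \<le> (a + b) powr \<gamma>" .
  then have "(supp_right M - supp_left M) powr (1/\<gamma>) \<le> ((a + b) powr \<gamma>) powr (1/\<gamma>)"
    using lt g by (intro powr_mono2) auto
  also have "\<dots> = a + b" using a b g by (simp add: powr_powr)
  finally show ?thesis unfolding a_def b_def H_def K_def .
qed


lemma final_scalar:
  fixes X Y D \<gamma> :: real
  assumes "0 \<le> X" "X \<le> D" "0 \<le> Y" "Y \<le> D" "1 \<le> \<gamma>"
    and m: "D powr (1/\<gamma>) \<le> X powr (1/\<gamma>) + Y powr (1/\<gamma>)"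
  shows "(D powr (1/\<gamma>) - X powr (1/\<gamma>)) powr \<gamma> \<le> Y \<and> Y \<le> (D powr (1/\<gamma>) + X powr (1/\<gamma>)) powr \<gamma>"
proof
  have xu: "X powr (1/\<gamma>) \<le> D powr (1/\<gamma>)" using assms by (intro powr_mono2) auto
  have "(D powr (1/\<gamma>) - X powr (1/\<gamma>)) powr \<gamma> \<le> (Y powr (1/\<gamma>)) powr \<gamma>"
    using xu m assms by (intro powr_mono2) auto
  also have "\<dots> = Y" using assms by (simp add: powr_powr)
  finally show "(D powr (1/\<gamma>) - X powr (1/\<gamma>)) powr \<gamma> \<le> Y" .
  have "Y \<le> D" by fact
  also have "D = (D powr (1/\<gamma>)) powr \<gamma>" using assms by (simp add: powr_powr)
  also have "\<dots> \<le> (D powr (1/\<gamma>) + X powr (1/\<gamma>)) powr \<gamma>"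
    using assms by (intro powr_mono2) auto
  finally show "Y \<le> (D powr (1/\<gamma>) + X powr (1/\<gamma>)) powr \<gamma>" .
qed

lemma final_scalar2:
  fixes G K K2 \<gamma> :: real
  assumes "0 \<le> K" "G \<le> K" "1 \<le> \<gamma>"
  shows "G \<le> (K powr (1/\<gamma>) + K2 powr (1/\<gamma>)) powr \<gamma>"
proof -
  have "G \<le> K" by fact
  also have "K = (K powr (1/\<gamma>)) powr \<gamma>" using assms by (simp add: powr_powr)
  also have "\<dots> \<le> (K powr (1/\<gamma>) + K2 powr (1/\<gamma>)) powr \<gamma>"
    using assms by (intro powr_mono2) auto
  finally show ?thesis .
qed

theorem proposition6:
  fixes M :: "real measure"
  assumes "real_distribution M"
    and "bdd_below {x. 0 < cdf M x}"
    and "bdd_above {x. 0 < 1 - cdf M x}"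
  defines "l \<equiv> supp_left M" and "r \<equiv> supp_right M"
  shows
    "(\<forall>\<gamma>::real. 1 \<le> \<gamma> \<longrightarrow> (\<gamma>, 0) \<in> CIGF_dom M \<longrightarrow> (0, \<gamma>) \<in> CIGF_dom M \<longrightarrow>
        ((r - l) powr (1/\<gamma>) - CIGF_H M \<gamma> powr (1/\<gamma>)) powr \<gamma> \<le> CIGF_K M \<gamma> \<and>
        CIGF_K M \<gamma> \<le> ((r - l) powr (1/\<gamma>) + CIGF_H M \<gamma> powr (1/\<gamma>)) powr \<gamma> \<and>
        ((r - l) powr (1/\<gamma>) - CIGF_K M \<gamma> powr (1/\<gamma>)) powr \<gamma> \<le> CIGF_H M \<gamma> \<and>
        CIGF_H M \<gamma> \<le> ((r - l) powr (1/\<gamma>) + CIGF_K M \<gamma> powr (1/\<gamma>)) powr \<gamma>)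
   \<and> (\<forall>\<gamma>::real. 1 \<le> \<gamma> \<longrightarrow> (0, \<gamma>) \<in> CIGF_dom M \<longrightarrow>
        CIGF M \<gamma> \<gamma> \<le> (CIGF_K M \<gamma> powr (1/\<gamma>) + CIGF_K M (2*\<gamma>) powr (1/\<gamma>)) powr \<gamma>)
   \<and> (\<forall>\<gamma>::real. 1 \<le> \<gamma> \<longrightarrow> (\<gamma>, 0) \<in> CIGF_dom M \<longrightarrow>
        CIGF M \<gamma> \<gamma> \<le> (CIGF_H M \<gamma> powr (1/\<gamma>) + CIGF_H M (2*\<gamma>) powr (1/\<gamma>)) powr \<gamma>)"
proof (intro conjI allI impI)
  fix \<gamma> :: real assume g: "1 \<le> \<gamma>"
  have H: "0 \<le> CIGF_H M \<gamma>" "CIGF_H M \<gamma> \<le> r - l"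
    using cigf_basic(2,3)[OF assms(1-3), of \<gamma> 0] g unfolding CIGF_H_def l_def r_def by auto
  have K: "0 \<le> CIGF_K M \<gamma>" "CIGF_K M \<gamma> \<le> r - l"
    using cigf_basic(2,3)[OF assms(1-3), of 0 \<gamma>] g unfolding CIGF_K_def l_def r_def by auto
  have m: "(r - l) powr (1/\<gamma>) \<le> CIGF_H M \<gamma> powr (1/\<gamma>) + CIGF_K M \<gamma> powr (1/\<gamma>)"
    using cigf_mink[OF assms(1-3) g] unfolding l_def r_def .
  note f1 = final_scalar[OF H(1,2) K(1,2) g m]
  note f2 = final_scalar[OF K(1,2) H(1,2) g m[unfolded add.commute[of "CIGF_H M \<gamma> powr (1/\<gamma>)"]]]
  show "((r - l) powr (1/\<gamma>) - CIGF_H M \<gamma> powr (1/\<gamma>)) powr \<gamma> \<le> CIGF_K M \<gamma>"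
    using f1 by simp
  show "CIGF_K M \<gamma> \<le> ((r - l) powr (1/\<gamma>) + CIGF_H M \<gamma> powr (1/\<gamma>)) powr \<gamma>"
    using f1 by simp
  show "((r - l) powr (1/\<gamma>) - CIGF_K M \<gamma> powr (1/\<gamma>)) powr \<gamma> \<le> CIGF_H M \<gamma>"
    using f2 by simp
  show "CIGF_H M \<gamma> \<le> ((r - l) powr (1/\<gamma>) + CIGF_K M \<gamma> powr (1/\<gamma>)) powr \<gamma>"
    using f2 by simp
  show "CIGF M \<gamma> \<gamma> \<le> (CIGF_K M \<gamma> powr (1/\<gamma>) + CIGF_K M (2*\<gamma>) powr (1/\<gamma>)) powr \<gamma>"
    by (rule final_scalar2[OF K(1) cigf_G_le(1)[OF assms(1-3)] g]) (use g in simp)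
  show "CIGF M \<gamma> \<gamma> \<le> (CIGF_H M \<gamma> powr (1/\<gamma>) + CIGF_H M (2*\<gamma>) powr (1/\<gamma>)) powr \<gamma>"
    by (rule final_scalar2[OF H(1) cigf_G_le(2)[OF assms(1-3)] g]) (use g in simp)
qed

end
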